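(* Let $a,M$ be positive integers and let $\lambda=\lambda_1/\lambda_2$ with $\lambda_1,\lambda_2$ coprime integers, $\lambda_2\ge1$. Call a positive integer $L$ feasible (for $a,M,\lambda$) if $a\mid L$, $M\mid L$, $\frac{L}{a}\lambda\in\mathbb{Z}$ and $\frac{L}{M}\lambda\in\mathbb{Z}$. Then the minimal feasible $L$ is $L_{\min}=\lambda_2\,\mathrm{lcm}(a,M)$, and every feasible $L$ is a multiple of $L_{\min}$.
   Context: Interpretation: $L$ is the signal length, $a$ the time shift, $M$ the number of frequency channels (frequency shift $b=L/M$), and $\lambda$ the relative shear, so that the shear parameter is $s=\lambda b$; the conditions in the definition of feasibility are exactly those for these parameters to define a lattice (subgroup) of $\mathbb{Z}_L^2$ generated by $(a,s)^T$ and $(0,b)^T$ in normal form. *)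

theory Defs
  imports Complex_Main
begin

definition feasible :: "nat \<Rightarrow> nat \<Rightarrow> rat \<Rightarrow> nat \<Rightarrow> bool" where
  "feasible a M lam L \<longleftrightarrow>
     L > 0 \<and> a dvd L \<and> M dvd L \<and>
     (of_nat L / of_nat a) * lam \<in> \<int> \<and> (of_nat L / of_nat M) * lam \<in> \<int>"

end

theory Submission
  imports Defs
begin

lemma rat_int_iff:
  fixes lam1 lam2 k :: int
  assumes "coprime lam1 lam2" and "lam2 \<ge> 1"
  shows "(of_int k * (of_int lam1 / of_int lam2) :: rat) \<in> \<int> \<longleftrightarrow> lam2 dvd k"
proof
  assume "(of_int k * (of_int lam1 / of_int lam2) :: rat) \<in> \<int>"
  then obtain m where m: "(of_int k * (of_int lam1 / of_int lam2) :: rat) = of_int m"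
    by (auto elim: Ints_cases)
  have "(of_int (k*lam1) :: rat) = of_int (m*lam2)" using m assms(2)
    by (simp add: field_simps)
  hence "k*lam1 = m*lam2" by (simp only: of_int_eq_iff)
  hence "lam2 dvd k*lam1" by (metis dvd_triv_right)
  thus "lam2 dvd k" using assms(1)
    by (metis coprime_commute coprime_dvd_mult_left_iff)
next
  assume "lam2 dvd k"
  then obtain j where "k = lam2*j" by auto
  hence "(of_int k * (of_int lam1 / of_int lam2) :: rat) = of_int (j*lam1)" using assms(2)
    by (simp add: field_simps)
  thus "(of_int k * (of_int lam1 / of_int lam2) :: rat) \<in> \<int>" by simp
qed

lemma part_iff:
  fixes lam1 lam2 :: int and a L :: nat
  assumes "coprime lam1 lam2" and "lam2 \<ge> 1" and "a > 0" and "a dvd L"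
  shows "((of_nat L / of_nat a) * (of_int lam1 / of_int lam2) :: rat) \<in> \<int>
     \<longleftrightarrow> a * nat lam2 dvd L"
proof -
  have e: "(of_nat L / of_nat a :: rat) = of_int (int (L div a))"
  proof -
    obtain q where q: "L = a * q" using assms(4) by (auto elim: dvdE)
    have "L div a = q" using q assms(3) by simp
    thus ?thesis using q assms(3) by simp
  qed
  have "lam2 dvd int (L div a) \<longleftrightarrow> nat lam2 dvd L div a"
  proof -
    have l: "lam2 = int (nat lam2)" using assms(2) by simp
    show ?thesis by (subst l) (simp only: int_dvd_int_iff)
  qed
  also have "\<dots> \<longleftrightarrow> nat lam2 * a dvd L"
    using assms(3,4) by (simp add: dvd_div_iff_mult)
  finally have c: "lam2 dvd int (L div a) \<longleftrightarrow> a * nat lam2 dvd L" by (simp only: mult.commute)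
  show ?thesis unfolding e using rat_int_iff[OF assms(1,2), of "int (L div a)"] c by (simp only:)
qed

theorem proposition3p7:
  fixes a M :: nat and lam1 lam2 :: int
  assumes "a > 0" and "M > 0"
    and "coprime lam1 lam2" and "lam2 \<ge> 1"
  defines "lam \<equiv> (of_int lam1 / of_int lam2 :: rat)"
  shows "feasible a M lam (nat lam2 * lcm a M)
       \<and> (LEAST L. feasible a M lam L) = nat lam2 * lcm a M
       \<and> (\<forall>L. feasible a M lam L \<longrightarrow> (nat lam2 * lcm a M) dvd L)"
proof -
  have char: "feasible a M lam L \<longleftrightarrow> L > 0 \<and> nat lam2 * lcm a M dvd L" for L
  proof -
    have "feasible a M lam L \<longleftrightarrow> L > 0 \<and> a * nat lam2 dvd L \<and> M * nat lam2 dvd L"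
    proof
      assume f: "feasible a M lam L"
      have f': "L > 0" "a dvd L" "M dvd L"
        "(of_nat L / of_nat a) * (of_int lam1 / of_int lam2) \<in> (\<int>::rat set)"
        "(of_nat L / of_nat M) * (of_int lam1 / of_int lam2) \<in> (\<int>::rat set)"
        using f unfolding feasible_def lam_def by blast+
      show "L > 0 \<and> a * nat lam2 dvd L \<and> M * nat lam2 dvd L"
        using f'(1) part_iff[OF assms(3,4) assms(1) f'(2)] part_iff[OF assms(3,4) assms(2) f'(3)] f'(4,5)
        by blast
    next
      assume h: "L > 0 \<and> a * nat lam2 dvd L \<and> M * nat lam2 dvd L"
      hence ad: "a dvd L" and md: "M dvd L" by (auto intro: dvd_mult_left)
      have i1: "(of_nat L / of_nat a) * (of_int lam1 / of_int lam2) \<in> (\<int>::rat set)"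
        using part_iff[OF assms(3,4) assms(1) ad] h by blast
      have i2: "(of_nat L / of_nat M) * (of_int lam1 / of_int lam2) \<in> (\<int>::rat set)"
        using part_iff[OF assms(3,4) assms(2) md] h by blast
      show "feasible a M lam L"
        unfolding feasible_def lam_def using h ad md i1 i2 by blast
    qed
    also have "\<dots> \<longleftrightarrow> L > 0 \<and> lcm (nat lam2 * a) (nat lam2 * M) dvd L"
      by (simp add: mult.commute)
    also have "lcm (nat lam2 * a) (nat lam2 * M) = nat lam2 * lcm a M"
      by (simp add: lcm_mult_left)
    finally show ?thesis .
  qed
  define N where "N = nat lam2 * lcm a M"
  have Npos: "N > 0" using assms by (simp add: N_def lcm_pos_nat)
  have fN: "feasible a M lam N" using char Npos N_def by simp
  have le: "N \<le> L" if "feasible a M lam L" for L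
    using char[of L] that N_def by (simp add: dvd_imp_le)
  have "(LEAST L. feasible a M lam L) = N"
    using fN le by (intro Least_equality) auto
  moreover have "\<forall>L. feasible a M lam L \<longrightarrow> N dvd L" using char N_def by blast
  ultimately have "feasible a M lam N \<and> (LEAST L. feasible a M lam L) = N \<and> (\<forall>L. feasible a M lam L \<longrightarrow> N dvd L)"
    using fN by (intro conjI)
  thus ?thesis unfolding N_def .
qed

end
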